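(* Let $(V,\mathrm{dist})$ be a metric space and $p_1,\dots,p_n\in V$ (not necessarily distinct). For $t\in[n]$ let $R_t:=\sum_{i=1}^t\mathrm{dist}(p_t,p_i)$ and $Q_t:=\sum_{i=1}^t\sum_{j=1}^t\mathrm{dist}(p_i,p_j)$. For any $t\in[n]$ with $Q_t>0$, $$\frac{2R_t}{Q_t}\ \ge\ \frac{\sum_{i=1}^n\mathrm{dist}(p_t,p_i)}{Q_n}.$$ *)

theory Defs
  imports "HOL-Analysis.Analysis"
begin

end

theory Submission
  imports Defs
begin

lemma key_ineq:
  fixes x Q R D t :: real
  assumes "0 \<le> x" "0 \<le> R" "0 \<le> D" "Q \<le> 2*t*R" "Q \<le> 2*t*D" "t*x \<le> R + D"
  shows "x * Q \<le> 4 * R * D"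
proof (cases "R \<le> D")
  case True
  have "x * Q \<le> x * (2*t*R)" using assms by (simp add: mult_left_mono)
  also have "\<dots> = 2*R*(t*x)" by simp
  also have "\<dots> \<le> 2*R*(R+D)" using assms by (simp add: mult_left_mono)
  also have "\<dots> \<le> 4*R*D"
  proof -
    have "R*R \<le> R*D" using True assms by (intro mult_left_mono)
    then show ?thesis by (simp add: algebra_simps)
  qed
  finally show ?thesis .
next
  case False
  have "x * Q \<le> x * (2*t*D)" using assms by (simp add: mult_left_mono)
  also have "\<dots> = 2*D*(t*x)" by simp
  also have "\<dots> \<le> 2*D*(R+D)" using assms by (simp add: mult_left_mono)
  also have "\<dots> \<le> 4*R*D"
  proof -
    have "D*D \<le> D*R" using False assms by (intro mult_left_mono) auto
    then show ?thesis by (simp add: algebra_simps)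
  qed
  finally show ?thesis .
qed

theorem lemma3p7:
  fixes p :: "nat \<Rightarrow> 'a::metric_space" and n t :: nat
  assumes "t \<in> {1..n}"
    and "(\<Sum>i=1..t. \<Sum>j=1..t. dist (p i) (p j)) > 0"
  shows "2 * (\<Sum>i=1..t. dist (p t) (p i)) / (\<Sum>i=1..t. \<Sum>j=1..t. dist (p i) (p j))
         \<ge> (\<Sum>i=1..n. dist (p t) (p i)) / (\<Sum>i=1..n. \<Sum>j=1..n. dist (p i) (p j))"
proof -
  define A where "A = {1..t}"
  define C where "C = {t+1..n}"
  have tA: "t \<in> A" using assms(1) by (auto simp: A_def)
  have B: "{1..n} = A \<union> C" "A \<inter> C = {}" "finite A" "finite C"
    using assms(1) by (auto simp: A_def C_def)
  have cardA: "real (card A) = real t" by (simp add: A_def)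
  define d where "d = (\<lambda>i j. dist (p i) (p j))"
  define R where "R = (\<Sum>i\<in>A. d t i)"
  define Qt where "Qt = (\<Sum>i\<in>A. \<Sum>j\<in>A. d i j)"
  define DA where "DA = (\<lambda>j. \<Sum>i\<in>A. d i j)"
  define Sc where "Sc = (\<Sum>j\<in>C. d t j)"
  define AC where "AC = (\<Sum>j\<in>C. DA j)"
  define CC where "CC = (\<Sum>i\<in>C. \<Sum>j\<in>C. d i j)"
  define Qn where "Qn = (\<Sum>i\<in>A\<union>C. \<Sum>j\<in>A\<union>C. d i j)"
  define S where "S = (\<Sum>j\<in>A\<union>C. d t j)"
  have dnn: "\<And>i j. d i j \<ge> 0" by (simp add: d_def)
  have dsym: "\<And>i j. d i j = d j i" by (simp add: d_def dist_commute)
  have dtri: "\<And>i j k. d i k \<le> d i j + d j k" by (simp add: d_def dist_triangle)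
  have Rnn: "R \<ge> 0" unfolding R_def by (simp add: dnn sum_nonneg)
  have CCnn: "CC \<ge> 0" unfolding CC_def by (simp add: dnn sum_nonneg)
  have ACnn: "AC \<ge> 0" unfolding AC_def DA_def by (simp add: dnn sum_nonneg)
  have Qtpos: "Qt > 0" using assms(2) by (simp add: Qt_def A_def d_def)
  have Qt_R: "Qt \<le> 2 * real t * R"
  proof -
    have "Qt \<le> (\<Sum>i\<in>A. \<Sum>j\<in>A. d t i + d t j)"
      unfolding Qt_def by (intro sum_mono) (metis dtri dsym)
    also have "\<dots> = 2 * real t * R"
      by (simp add: sum.distrib R_def cardA sum_distrib_left[symmetric] sum.swap[of _ A A])
    finally show ?thesis .
  qed
  have Qt_D: "Qt \<le> 2 * real t * DA j" for j
  proof -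
    have "Qt \<le> (\<Sum>i\<in>A. \<Sum>k\<in>A. d i j + d k j)"
      unfolding Qt_def by (intro sum_mono) (metis dtri dsym)
    also have "\<dots> = 2 * real t * DA j"
      by (simp add: sum.distrib DA_def cardA sum.swap[of _ A A] sum_distrib_left mult.assoc)
    finally show ?thesis .
  qed
  have tx: "t * d t j \<le> R + DA j" for j
  proof -
    have "t * d t j = (\<Sum>i\<in>A. d t j)" by (simp add: cardA)
    also have "\<dots> \<le> (\<Sum>i\<in>A. d t i + d i j)" by (intro sum_mono) (rule dtri)
    also have "\<dots> = R + DA j" by (simp add: sum.distrib R_def DA_def)
    finally show ?thesis .
  qed
  have per: "d t j * Qt \<le> 4 * R * DA j" for j
    by (rule key_ineq[OF dnn Rnn _ Qt_R Qt_D tx]) (simp add: DA_def dnn sum_nonneg)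
  have ScQ: "Sc * Qt \<le> 4 * R * AC"
    unfolding Sc_def AC_def sum_distrib_left sum_distrib_right by (intro sum_mono per)
  have S_eq: "S = R + Sc" unfolding S_def R_def Sc_def using B by (simp add: sum.union_disjoint)
  have AC': "(\<Sum>i\<in>A. \<Sum>j\<in>C. d i j) = AC" unfolding AC_def DA_def by (rule sum.swap)
  have AC'': "(\<Sum>i\<in>C. \<Sum>j\<in>A. d i j) = AC" unfolding AC_def DA_def by (simp add: dsym)
  have Qn_eq: "Qn = Qt + 2 * AC + CC"
    unfolding Qn_def using B AC' AC''
    by (simp add: sum.union_disjoint sum.distrib Qt_def CC_def)
  have "S * Qt \<le> 2 * R * Qn"
  proof -
    have "S * Qt = R * Qt + Sc * Qt" by (simp add: S_eq algebra_simps)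
    also have "\<dots> \<le> R * Qt + 4 * R * AC" using ScQ by simp
    also have "\<dots> \<le> 2 * R * Qn" unfolding Qn_eq using Rnn CCnn Qtpos
      by (simp add: algebra_simps mult_nonneg_nonneg)
    finally show ?thesis .
  qed
  moreover have "Qn > 0" using Qn_eq Qtpos ACnn CCnn by simp
  ultimately have "S / Qn \<le> 2 * R / Qt" using Qtpos
    by (simp add: divide_simps)
  then show ?thesis using B(1)
    by (simp add: S_def Qn_def R_def Qt_def d_def A_def)
qed

end
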